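(* Let $\Omega\subset\mathbb{R}^2$ be a connected open set. Let $\Phi(x^1,x^2;\lambda)$ be an invertible $n\times n$ matrix function, smooth in $(x^1,x^2)$ and holomorphic in $\lambda$ near $\lambda_i$ with $\Phi(x;\lambda_i)$ invertible. Let $T(x^1,x^2;\lambda)=\sum_{j=0}^N C_j(x^1,x^2)\lambda^j$ be a matrix polynomial in $\lambda$ with smooth coefficients, such that $\lambda_i$ (a constant) is a simple zero of $\lambda\mapsto\det T(x;\lambda)$ for every $x\in\Omega$. Put $\tilde\Phi=T\Phi$ and suppose that there are matrix functions $\tilde U_k(x;\lambda)$, $k=1,2$, holomorphic in $\lambda$ in a neighbourhood of $\lambda_i$, with $\tilde\Phi_{,k}=\tilde U_k\tilde\Phi$. Then there exists a constant vector $p_i\in\mathbb{C}^n$, $p_i\neq 0$, such that $\tilde\Phi(x;\lambda_i)p_i=0$ and $\tilde\Phi_{,k}(x;\lambda_i)p_i=0$ for $k=1,2$ and all $x\in\Omega$.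
   Context: $f_{,k}$ denotes $\partial f/\partial x^k$ with $(x^1,x^2)\in\Omega$. *)

theory Defs
  imports "HOL-Analysis.Analysis"
begin

definition partial_d :: "2 \<Rightarrow> (real^2 \<Rightarrow> 'b::real_normed_vector) \<Rightarrow> real^2 \<Rightarrow> 'b" where
  "partial_d k f x = vector_derivative (\<lambda>t. f (x + t *\<^sub>R axis k 1)) (at 0)"

fun iter_partial :: "2 list \<Rightarrow> (real^2 \<Rightarrow> 'b::real_normed_vector) \<Rightarrow> real^2 \<Rightarrow> 'b" where
  "iter_partial [] f = f"
| "iter_partial (k # ks) f = partial_d k (iter_partial ks f)"

definition smooth_on :: "(real^2) set \<Rightarrow> (real^2 \<Rightarrow> 'b::real_normed_vector) \<Rightarrow> bool" where
  "smooth_on \<Omega> f \<longleftrightarrow>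
     (\<forall>ks. continuous_on \<Omega> (iter_partial ks f) \<and>
        (\<forall>x\<in>\<Omega>. \<forall>k. (\<lambda>t. iter_partial ks f (x + t *\<^sub>R axis k 1)) differentiable (at 0)))"

definition mat_holomorphic_on :: "(complex \<Rightarrow> complex^'n^'n) \<Rightarrow> complex set \<Rightarrow> bool" where
  "mat_holomorphic_on F S \<longleftrightarrow> (\<forall>a b. (\<lambda>l. F l $ a $ b) holomorphic_on S)"

definition mat_poly :: "nat \<Rightarrow> (nat \<Rightarrow> complex^'n^'n) \<Rightarrow> complex \<Rightarrow> complex^'n^'n" where
  "mat_poly N C l = (\<chi> a b. \<Sum>j\<le>N. C j $ a $ b * l ^ j)"

end

theory Submission
  imports Defs
begin


lemma ker_exists:
  fixes A :: "'a::field^'n^'n"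
  assumes "det A = 0"
  shows "\<exists>p. p \<noteq> 0 \<and> A *v p = 0"
proof -
  have "\<not> inj ((*v) A)"
    using det_nz_iff_inj_gen[of "(*v) A"] assms by simp
  then obtain x y where "x \<noteq> y" "A *v x = A *v y" unfolding inj_def by blast
  then show ?thesis
    by (intro exI[of _ "x - y"]) (simp add: matrix_vector_mult_diff_distrib)
qed

lemma inj_from_ker:
  fixes A :: "'a::field^'n^'n"
  assumes "\<And>z. A *v z = 0 \<Longrightarrow> z = 0"
  shows "det A \<noteq> 0"
proof -
  have "inj ((*v) A)"
    unfolding inj_def using assms[of "_ - _"] by (auto simp: matrix_vector_mult_diff_distrib)
  then show ?thesis using det_nz_iff_inj_gen[of "(*v) A"] by simp
qed

definition cof :: "'a::comm_ring_1^'n^'n \<Rightarrow> 'n \<Rightarrow> 'a^'n" where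
  "cof A j = (\<chi> k. det (\<chi> i. if i = j then axis k 1 else A $ i))"

lemma cof_ker:
  fixes A :: "'a::comm_ring_1^'n^'n"
  shows "A *v cof A j = det A *s axis j 1"
proof -
  have "(A *v cof A j) $ r = (det A *s axis j 1) $ r" for r
  proof -
    have "(A *v cof A j) $ r = (\<Sum>k\<in>UNIV. A$r$k * det (\<chi> i. if i = j then axis k 1 else A $ i))"
      by (simp add: matrix_vector_mult_def cof_def)
    also have "\<dots> = (\<Sum>k\<in>UNIV. det (\<chi> i. if i = j then A$r$k *s axis k 1 else A $ i))"
      by (simp add: det_row_mul)
    also have "\<dots> = det (\<chi> i. if i = j then (\<Sum>k\<in>UNIV. A$r$k *s axis k 1) else A $ i)"
      by (rule det_linear_row_sum[symmetric]) simp
    also have "\<dots> = det (\<chi> i. if i = j then A $ r else A $ i)"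
      by (simp only: basis_expansion)
    also have "\<dots> = (det A *s axis j 1) $ r"
    proof (cases "r = j")
      case True
      then show ?thesis
      proof -
        have "(\<chi> i. if i = j then A $ r else A $ i) = A" using True by (simp add: vec_eq_iff)
        then show ?thesis using True by (simp add: axis_def)
      qed
    next
      case False
      have "det (\<chi> i. if i = j then A $ r else A $ i) = 0"
        by (rule det_identical_rows[of r j]) (use False in \<open>auto simp: row_def vec_eq_iff\<close>)
      then show ?thesis using False by (simp add: axis_def)
    qed
    finally show ?thesis .
  qed
  then show ?thesis by (simp add: vec_eq_iff)
qed

lemma dot_swap:
  fixes A :: "'a::comm_ring_1^'n^'n"
  shows "(\<Sum>i\<in>UNIV. c$i * (A *v z)$i) = (\<Sum>l\<in>UNIV. (transpose A *v c)$l * z$l)"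
  by (simp add: matrix_vector_mult_def transpose_def sum_distrib_left sum_distrib_right mult_ac)
     (rule sum.swap)

lemma cof_nonzero:
  fixes A :: "'a::field^'n^'n"
  assumes "det A = 0"
  and ker1: "\<forall>p v. A *v p = 0 \<longrightarrow> p \<noteq> 0 \<longrightarrow> A *v v = 0 \<longrightarrow> (\<exists>c. v = c *s p)"
  shows "\<exists>j a. cof A j $ a \<noteq> 0"
proof -
  obtain p0 where p0: "p0 \<noteq> 0" "A *v p0 = 0" using ker_exists[OF assms(1)] by blast
  then obtain a where a: "p0 $ a \<noteq> 0" by (auto simp: vec_eq_iff)
  have "det (transpose A) = 0" using assms(1) by simp
  then obtain c where c: "c \<noteq> 0" "transpose A *v c = 0" using ker_exists by blast
  then obtain j where j: "c $ j \<noteq> 0" by (auto simp: vec_eq_iff)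
  let ?N = "(\<chi> i. if i = j then axis a 1 else A $ i) :: 'a^'n^'n"
  have "det ?N \<noteq> 0"
  proof (rule inj_from_ker)
    fix z assume z: "?N *v z = 0"
    have zi: "(A *v z) $ i = 0" if "i \<noteq> j" for i
    proof -
      have "(A *v z) $ i = (?N *v z) $ i" using that by (simp add: matrix_vector_mult_def)
      then show ?thesis using z by simp
    qed
    have za: "z $ a = 0"
    proof -
      have "(?N *v z) $ j = z $ a"
        by (simp add: matrix_vector_mult_def axis_def if_distrib[of "\<lambda>x. x * _"] cong: if_cong)
      then show ?thesis using z by simp
    qed
    have "(\<Sum>i\<in>UNIV. c$i * (A *v z)$i) = 0" using c(2) by (simp add: dot_swap)
    moreover have "(\<Sum>i\<in>UNIV. c$i * (A *v z)$i) = c$j * (A *v z)$j"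
    proof -
      have "(\<Sum>i\<in>UNIV. c$i * (A *v z)$i) = (\<Sum>i\<in>UNIV. if i = j then c$j * (A *v z)$j else 0)"
        by (rule sum.cong) (auto simp: zi)
      then show ?thesis by simp
    qed
    ultimately have "(A *v z) $ j = 0" using j by simp
    then have "A *v z = 0" using zi by (metis vec_eq_iff zero_index)
    then obtain \<mu> where "z = \<mu> *s p0" using ker1 p0 by blast
    then show "z = 0" using za a by simp
  qed
  then have "cof A j $ a \<noteq> 0" by (simp add: cof_def)
  then show ?thesis by blast
qed


lemma bounded_linear_axis: "bounded_linear (axis i :: 'b::real_normed_vector \<Rightarrow> 'b^'n)"
proof
  show "axis i (x + y) = axis i x + axis i y" for x y :: 'b by (auto simp add: vec_eq_iff axis_def)
  show "axis i (r *\<^sub>R x) = r *\<^sub>R axis i x" for r and x :: 'b by (simp add: vec_eq_iff axis_def)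
  show "\<exists>K. \<forall>x. norm (axis i x :: 'b^'n) \<le> norm x * K"
  proof (intro exI allI)
    fix x :: 'b
    have "norm (axis i x :: 'b^'n) = norm x"
      unfolding norm_vec_def L2_set_def
      by (simp add: axis_def if_distrib[of norm] if_distrib[of "\<lambda>x. x^2"] cong: if_cong)
    then show "norm (axis i x :: 'b^'n) \<le> norm x * 1" by simp
  qed
qed

lemma vec_expand_axis: "(x::'b::real_normed_vector^'n) = (\<Sum>i\<in>UNIV. axis i (x $ i))"
  by (simp add: vec_eq_iff axis_def)

lemma vec_differentiable:
  fixes f :: "'a::real_normed_vector \<Rightarrow> 'b::real_normed_vector^'n"
  assumes "\<And>i. (\<lambda>t. f t $ i) differentiable F"
  shows "f differentiable F"
proof -
  have "(\<lambda>t. \<Sum>i\<in>UNIV. axis i (f t $ i)) differentiable F"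
  proof (rule differentiable_sum)
    show "\<forall>i\<in>UNIV. (\<lambda>t. axis i (f t $ i)) differentiable F"
    proof
      fix i
      obtain D where "((\<lambda>t. f t $ i) has_derivative D) F" using assms[of i] unfolding differentiable_def by blast
      then have "((\<lambda>t. axis i (f t $ i)) has_derivative (\<lambda>h. axis i (D h))) F"
        by (rule bounded_linear.has_derivative[OF bounded_linear_axis])
      then show "(\<lambda>t. axis i (f t $ i)) differentiable F" unfolding differentiable_def by blast
    qed
  qed simp
  moreover have "(\<lambda>t. \<Sum>i\<in>UNIV. axis i (f t $ i)) = f" by (rule ext) (rule vec_expand_axis[symmetric])
  ultimately show ?thesis by simp
qed

lemma vec_nth_differentiable:
  assumes "f differentiable F"
  shows "(\<lambda>t. f t $ i) differentiable F"
proof -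
  obtain D where "(f has_derivative D) F" using assms unfolding differentiable_def by blast
  then have "((\<lambda>t. f t $ i) has_derivative (\<lambda>h. D h $ i)) F"
    by (rule bounded_linear.has_derivative[OF bounded_linear_vec_nth])
  then show ?thesis unfolding differentiable_def by blast
qed

lemma vec_nth_has_vector_derivative:
  assumes "(f has_vector_derivative D) F"
  shows "((\<lambda>t. f t $ i) has_vector_derivative D $ i) F"
  using bounded_linear.has_vector_derivative[OF bounded_linear_vec_nth assms] .

lemma differentiable_prod':
  fixes f :: "'i \<Rightarrow> 'a::real_normed_vector \<Rightarrow> 'b::real_normed_field"
  assumes "\<And>i. i \<in> I \<Longrightarrow> f i differentiable (at x within S)"
  shows "(\<lambda>x. \<Prod>i\<in>I. f i x) differentiable (at x within S)"
proof -
  from assms obtain D where "\<And>i. i \<in> I \<Longrightarrow> (f i has_derivative D i) (at x within S)"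
    unfolding differentiable_def by metis
  then show ?thesis unfolding differentiable_def by (blast intro: has_derivative_prod)
qed

lemma det_differentiable:
  fixes A :: "'a::real_normed_vector \<Rightarrow> 'b::real_normed_field^'n^'n"
  assumes "\<And>i j. (\<lambda>t. A t $ i $ j) differentiable (at x within S)"
  shows "(\<lambda>t. det (A t)) differentiable (at x within S)"
  unfolding det_def
  by (intro differentiable_sum ballI differentiable_mult differentiable_const differentiable_prod' assms) simp

lemma det_continuous_on:
  fixes A :: "'a::topological_space \<Rightarrow> 'b::real_normed_field^'n^'n"
  assumes "\<And>i j. continuous_on S (\<lambda>t. A t $ i $ j)"
  shows "continuous_on S (\<lambda>t. det (A t))"
  unfolding det_def by (intro continuous_intros assms)

lemma det_isCont:
  fixes A :: "'a::t2_space \<Rightarrow> 'b::real_normed_field^'n^'n"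
  assumes "\<And>i j. isCont (\<lambda>t. A t $ i $ j) z"
  shows "isCont (\<lambda>t. det (A t)) z"
  unfolding det_def by (intro continuous_intros assms)


lemma line_vd_shift:
  fixes g :: "'a::real_normed_vector \<Rightarrow> 'b::real_normed_vector"
  assumes "((\<lambda>s. g ((x + t *\<^sub>R v) + s *\<^sub>R v)) has_vector_derivative D) (at 0)"
  shows "((\<lambda>s. g (x + s *\<^sub>R v)) has_vector_derivative D) (at t)"
proof -
  have f: "((\<lambda>s. s - t) has_vector_derivative 1) (at t)"
    by (auto intro!: derivative_eq_intros simp: has_real_derivative_iff_has_vector_derivative[symmetric])
  have "((\<lambda>s. g ((x + t *\<^sub>R v) + s *\<^sub>R v)) \<circ> (\<lambda>s. s - t) has_vector_derivative 1 *\<^sub>R D) (at t)"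
    by (rule vector_diff_chain_at[OF f]) (simp add: assms)
  moreover have "((\<lambda>s. g ((x + t *\<^sub>R v) + s *\<^sub>R v)) \<circ> (\<lambda>s. s - t)) = (\<lambda>s. g (x + s *\<^sub>R v))"
    by (rule ext) (simp add: algebra_simps)
  ultimately show ?thesis by simp
qed

lemma seg_const:
  fixes g :: "'a::real_normed_vector \<Rightarrow> 'b::real_normed_vector"
  assumes B: "convex B" and d: "\<forall>y\<in>B. ((\<lambda>s. g (y + s *\<^sub>R v)) has_vector_derivative 0) (at 0)"
    and x: "x \<in> B" and xs: "x + s *\<^sub>R v \<in> B"
  shows "g (x + s *\<^sub>R v) = g x"
proof -
  have inB: "x + t *\<^sub>R v \<in> B" if tS: "t \<in> closed_segment 0 s" for t
  proof -
    obtain u where u: "0 \<le> u" "u \<le> 1" "t = u * s"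
      using tS unfolding in_segment(1) by auto
    have "x + t *\<^sub>R v = (1 - u) *\<^sub>R x + u *\<^sub>R (x + s *\<^sub>R v)"
      using u by (simp add: algebra_simps)
    also have "\<dots> \<in> B" using convexD[OF B x xs, of "1-u" u] u by simp
    finally show ?thesis .
  qed
  have "\<exists>c. \<forall>t\<in>closed_segment 0 s. g (x + t *\<^sub>R v) = c"
  proof (rule has_derivative_zero_constant)
    show "convex (closed_segment 0 s)" by simp
    fix t assume t: "t \<in> closed_segment 0 s"
    have "((\<lambda>s. g (x + s *\<^sub>R v)) has_vector_derivative 0) (at t)"
      by (rule line_vd_shift) (use d inB[OF t] in blast)
    then show "((\<lambda>t. g (x + t *\<^sub>R v)) has_derivative (\<lambda>h. 0)) (at t within closed_segment 0 s)"
      unfolding has_vector_derivative_def by (auto intro: has_derivative_at_withinI)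
  qed
  then obtain c where "\<forall>t\<in>closed_segment 0 s. g (x + t *\<^sub>R v) = c" by blast
  then have "g (x + s *\<^sub>R v) = c" "g (x + 0 *\<^sub>R v) = c" using ends_in_segment[of 0 s] by blast+
  then show ?thesis by simp
qed


lemma core:
  fixes \<Omega> :: "(real^2) set" and M :: "real^2 \<Rightarrow> complex^'n^'n"
  assumes "open \<Omega>" "connected \<Omega>"
    and Mc: "continuous_on \<Omega> M"
    and Md: "\<forall>x\<in>\<Omega>. \<forall>k. (\<lambda>t. M (x + t *\<^sub>R axis k 1)) differentiable (at 0)"
    and Mdet: "\<forall>x\<in>\<Omega>. det (M x) = 0"
    and Mker: "\<forall>x\<in>\<Omega>. \<forall>p v. M x *v p = 0 \<longrightarrow> p \<noteq> 0 \<longrightarrow> M x *v v = 0 \<longrightarrow> (\<exists>c. v = c *s p)"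
    and MU: "\<forall>x\<in>\<Omega>. \<forall>k. \<exists>V. partial_d k M x = V ** M x"
  shows "\<exists>p. p \<noteq> 0 \<and> (\<forall>x\<in>\<Omega>. M x *v p = 0 \<and> (\<forall>k. partial_d k M x *v p = 0))"
proof (cases "\<Omega> = {}")
  case True
  then show ?thesis by (intro exI[of _ "axis undefined 1"]) simp
next
  case False
  then obtain x0 where x0: "x0 \<in> \<Omega>" by blast
  obtain p0 where p0: "p0 \<noteq> 0" "M x0 *v p0 = 0" using ker_exists Mdet x0 by blast
  define S where "S = {x\<in>\<Omega>. M x *v p0 = 0}"
  have MQ0: "M y *v cof (M y) j = 0" if "y \<in> \<Omega>" for y j
    using cof_ker[of "M y" j] Mdet that by simp
  have Mentc: "continuous_on \<Omega> (\<lambda>y. M y $ r $ c)" for r c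
    by (intro continuous_on_component Mc)
  have Qc: "continuous_on \<Omega> (\<lambda>y. cof (M y) j $ i)" for j i
    unfolding cof_def vec_lambda_beta
  proof (rule det_continuous_on)
    fix r c
    show "continuous_on \<Omega> (\<lambda>t. (\<chi> ia. if ia = j then axis i 1 else M t $ ia) $ r $ c)"
      by (cases "r = j") (simp_all add: Mentc)
  qed
  have Qd: "(\<lambda>t. cof (M (y + t *\<^sub>R axis k 1)) j $ i) differentiable (at 0)" if "y \<in> \<Omega>" for y k j i
    unfolding cof_def vec_lambda_beta
  proof (rule det_differentiable)
    fix r c
    have "(\<lambda>t. M (y + t *\<^sub>R axis k 1) $ r $ c) differentiable (at 0)"
      by (intro vec_nth_differentiable) (use Md that in blast)
    then show "(\<lambda>t. (\<chi> ia. if ia = j then axis i 1 else M (y + t *\<^sub>R axis k 1) $ ia) $ r $ c) differentiable (at 0)"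
      by (cases "r = j") simp_all
  qed
  have hQg: "((\<lambda>t. cof (M (y + t *\<^sub>R axis k 1)) j $ i) has_vector_derivative
      vector_derivative (\<lambda>t. cof (M (y + t *\<^sub>R axis k 1)) j $ i) (at 0)) (at 0)" if "y \<in> \<Omega>" for y k j i
    using Qd[OF that] by (simp add: vector_derivative_works)
  have "open S" unfolding open_contains_ball
  proof
    fix x1 assume x1S: "x1 \<in> S"
    then have x1: "x1 \<in> \<Omega>" "M x1 *v p0 = 0" by (auto simp: S_def)
    obtain j a where ja: "cof (M x1) j $ a \<noteq> 0" using cof_nonzero Mdet Mker x1 by blast
    define Q where "Q y = cof (M y) j" for y
    obtain e1 where e1: "e1 > 0" "\<forall>y. dist x1 y < e1 \<longrightarrow> Q y $ a \<noteq> 0"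
      using continuous_on_open_avoid[OF Qc[of j a] \<open>open \<Omega>\<close> x1(1) ja] unfolding Q_def by blast
    obtain e2 where e2: "e2 > 0" "ball x1 e2 \<subseteq> \<Omega>" using \<open>open \<Omega>\<close> x1(1) open_contains_ball by blast
    define B where "B = ball x1 (min e1 e2)"
    have BO: "B \<subseteq> \<Omega>" using e2 by (auto simp: B_def)
    have Ba: "Q y $ a \<noteq> 0" if "y \<in> B" for y using that e1 by (auto simp: B_def)
    have QB0: "Q y \<noteq> 0" if "y \<in> B" for y using Ba[OF that] by auto
    have deriv_ker: "\<exists>c. (\<chi> i. vector_derivative (\<lambda>t. Q (y + t *\<^sub>R axis k 1) $ i) (at 0)) = c *s Q y"
      if yB: "y \<in> B" for y k
    proof -
      have yO: "y \<in> \<Omega>" using yB BO by blast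
      define Qv where "Qv = (\<chi> i. vector_derivative (\<lambda>t. Q (y + t *\<^sub>R axis k 1) $ i) (at 0))"
      have hQ: "((\<lambda>t. Q (y + t *\<^sub>R axis k 1) $ i) has_vector_derivative Qv $ i) (at 0)" for i
        unfolding Qv_def vec_lambda_beta
        using Qd[OF yO, of k j i] unfolding Q_def by (simp add: vector_derivative_works)
      have hM: "((\<lambda>t. M (y + t *\<^sub>R axis k 1)) has_vector_derivative partial_d k M y) (at 0)"
        unfolding partial_d_def using Md yO by (simp add: vector_derivative_works)
      have hMe: "((\<lambda>t. M (y + t *\<^sub>R axis k 1) $ r $ l) has_vector_derivative partial_d k M y $ r $ l) (at 0)" for r l
        by (intro vec_nth_has_vector_derivative hM)
      have "(partial_d k M y *v Q y + M y *v Qv) $ r = 0" for r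
      proof -
        have d1: "((\<lambda>t. (M (y + t *\<^sub>R axis k 1) *v Q (y + t *\<^sub>R axis k 1)) $ r) has_vector_derivative
                (\<Sum>l\<in>UNIV. M y $ r $ l * Qv $ l + partial_d k M y $ r $ l * Q y $ l)) (at 0)"
          unfolding matrix_vector_mult_def vec_lambda_beta
          by (rule has_vector_derivative_sum) (use has_vector_derivative_mult[OF hMe hQ] in simp)
        have "{t. y + t *\<^sub>R axis k 1 \<in> \<Omega>} = (\<lambda>t. y + t *\<^sub>R axis k 1) -` \<Omega>" by auto
        moreover have "open ((\<lambda>t. y + t *\<^sub>R axis k 1) -` \<Omega>)"
          by (intro open_vimage \<open>open \<Omega>\<close> continuous_intros)
        ultimately have opn: "open {t. y + t *\<^sub>R axis k 1 \<in> \<Omega>}" by simp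
        have d2: "((\<lambda>t. (M (y + t *\<^sub>R axis k 1) *v Q (y + t *\<^sub>R axis k 1)) $ r) has_vector_derivative 0) (at 0)"
        proof (rule has_vector_derivative_transform_within_open[OF _ opn])
          show "((\<lambda>t. 0) has_vector_derivative 0) (at 0)" by (rule has_vector_derivative_const)
          show "0 \<in> {t. y + t *\<^sub>R axis k 1 \<in> \<Omega>}" using yO by simp
          fix t assume "t \<in> {t. y + t *\<^sub>R axis k 1 \<in> \<Omega>}"
          then show "0 = (M (y + t *\<^sub>R axis k 1) *v Q (y + t *\<^sub>R axis k 1)) $ r"
            using MQ0 unfolding Q_def by simp
        qed
        have "(\<Sum>l\<in>UNIV. M y $ r $ l * Qv $ l + partial_d k M y $ r $ l * Q y $ l) = 0"
          using vector_derivative_unique_at[OF d1 d2] .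
        then show ?thesis
          by (simp add: matrix_vector_mult_def sum.distrib add.commute)
      qed
      then have "partial_d k M y *v Q y + M y *v Qv = 0" by (simp add: vec_eq_iff)
      moreover obtain V where V: "partial_d k M y = V ** M y" using MU yO by blast
      moreover have "M y *v Q y = 0" using MQ0 yO unfolding Q_def by simp
      ultimately have "M y *v Qv = 0"
        by (simp add: matrix_vector_mul_assoc[symmetric])
      then obtain c where "Qv = c *s Q y" using Mker yO QB0[OF yB] \<open>M y *v Q y = 0\<close> by blast
      then show ?thesis unfolding Qv_def by blast
    qed
    define g where "g i y = Q y $ i / Q y $ a" for i y
    have gd: "\<forall>y\<in>B. ((\<lambda>s. g i (y + s *\<^sub>R axis k 1)) has_vector_derivative 0) (at 0)" for i k
    proof
      fix y assume yB: "y \<in> B"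
      have yO: "y \<in> \<Omega>" using yB BO by blast
      obtain c where c: "(\<chi> i. vector_derivative (\<lambda>t. Q (y + t *\<^sub>R axis k 1) $ i) (at 0)) = c *s Q y"
        using deriv_ker[OF yB] by blast
      have hq: "((\<lambda>t. Q (y + t *\<^sub>R axis k 1) $ i) has_vector_derivative c * Q y $ i) (at 0)" for i
      proof -
        have "vector_derivative (\<lambda>t. Q (y + t *\<^sub>R axis k 1) $ i) (at 0) = c * Q y $ i"
          using arg_cong[OF c, of "\<lambda>v. v $ i"] by simp
        then show ?thesis using hQg[OF yO, of k j i] unfolding Q_def by simp
      qed
      have "((\<lambda>t. Q (y + t *\<^sub>R axis k 1) $ i / Q (y + t *\<^sub>R axis k 1) $ a) has_derivative
          (\<lambda>h. ((h *\<^sub>R (c * Q y $ i)) * Q (y + 0 *\<^sub>R axis k 1) $ a - Q (y + 0 *\<^sub>R axis k 1) $ i * (h *\<^sub>R (c * Q y $ a))) /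
                (Q (y + 0 *\<^sub>R axis k 1) $ a * Q (y + 0 *\<^sub>R axis k 1) $ a))) (at 0)"
        by (rule has_derivative_divide'[OF hq[of i, unfolded has_vector_derivative_def]
              hq[of a, unfolded has_vector_derivative_def]]) (use Ba[OF yB] in simp)
      moreover have "(\<lambda>h. ((h *\<^sub>R (c * Q y $ i)) * Q (y + 0 *\<^sub>R axis k 1) $ a - Q (y + 0 *\<^sub>R axis k 1) $ i * (h *\<^sub>R (c * Q y $ a))) /
                (Q (y + 0 *\<^sub>R axis k 1) $ a * Q (y + 0 *\<^sub>R axis k 1) $ a)) = (\<lambda>h. h *\<^sub>R 0)"
        by (rule ext) (simp add: scaleR_conv_of_real algebra_simps)
      ultimately show "((\<lambda>s. g i (y + s *\<^sub>R axis k 1)) has_vector_derivative 0) (at 0)"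
        unfolding has_vector_derivative_def g_def by simp
    qed
    have gconst: "g i y = g i x1" if yB: "y \<in> B" for i y
    proof -
      define w where "w = x1 + (y$1 - x1$1) *\<^sub>R axis 1 1"
      have "dist x1 w = \<bar>(y - x1) $ 1\<bar>" by (simp add: w_def dist_norm)
      also have "\<dots> \<le> norm (y - x1)" by (rule component_le_norm_cart)
      also have "\<dots> < min e1 e2" using yB by (simp add: B_def dist_norm norm_minus_commute)
      finally have wB: "w \<in> B" by (simp add: B_def)
      have yw: "y = w + (y$2 - x1$2) *\<^sub>R axis 2 1"
        by (simp add: w_def vec_eq_iff forall_2 axis_def)
      have "g i y = g i w"
        using seg_const[OF convex_ball gd[of i 2, unfolded B_def] wB[unfolded B_def], where s="y$2 - x1$2"]
          yB yw by (simp add: B_def)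
      also have "\<dots> = g i x1"
        using seg_const[OF convex_ball gd[of i 1, unfolded B_def], where x=x1 and s="y$1 - x1$1"]
          wB e1(1) e2(1) by (simp add: B_def w_def)
      finally show ?thesis .
    qed
    have "B \<subseteq> S"
    proof
      fix y assume yB: "y \<in> B"
      have yO: "y \<in> \<Omega>" using yB BO by blast
      have x1B: "x1 \<in> B" using e1(1) e2(1) by (simp add: B_def)
      define \<mu> where "\<mu> = Q y $ a / Q x1 $ a"
      have \<mu>0: "\<mu> \<noteq> 0" using Ba[OF yB] Ba[OF x1B] by (simp add: \<mu>_def)
      have "Q y = \<mu> *s Q x1"
      proof -
        have "Q y $ i = \<mu> * Q x1 $ i" for i
        proof -
          have "Q y $ i = g i y * Q y $ a" using Ba[OF yB] by (simp add: g_def)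
          also have "\<dots> = g i x1 * Q y $ a" using gconst[OF yB] by simp
          also have "\<dots> = \<mu> * Q x1 $ i" by (simp add: g_def \<mu>_def)
          finally show ?thesis .
        qed
        then show ?thesis by (simp add: vec_eq_iff)
      qed
      then have "\<mu> *s (M y *v Q x1) = 0"
        using MQ0[OF yO, of j] by (simp add: Q_def vector_scalar_commute)
      then have MyQ: "M y *v Q x1 = 0" using \<mu>0 by (metis vector_mul_lcancel vector_smult_rzero)
      have "Q x1 \<noteq> 0" using Ba[OF x1B] by auto
      then obtain c where "p0 = c *s Q x1"
        using Mker x1 MQ0[OF x1(1), of j] unfolding Q_def by blast
      then have "M y *v p0 = 0" using MyQ by (simp add: vector_scalar_commute)
      then show "y \<in> S" using yO by (simp add: S_def)
    qed
    then show "\<exists>\<epsilon>>0. ball x1 \<epsilon> \<subseteq> S" using e1(1) e2(1) unfolding B_def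
      by (intro exI[of _ "min e1 e2"]) simp
  qed
  have "continuous_on \<Omega> (\<lambda>x. M x *v p0)"
  proof -
    have "(\<lambda>x. M x *v p0) = (\<lambda>x. \<chi> r. \<Sum>l\<in>UNIV. M x $ r $ l * p0 $ l)"
      by (simp add: matrix_vector_mult_def)
    moreover have "continuous_on \<Omega> (\<lambda>x. \<chi> r. \<Sum>l\<in>UNIV. M x $ r $ l * p0 $ l)"
      by (intro continuous_on_vec_lambda continuous_intros Mentc)
    ultimately show ?thesis by (simp only:)
  qed
  then have "closedin (top_of_set \<Omega>) S"
    unfolding S_def by (rule continuous_closedin_preimage_constant)
  moreover have "openin (top_of_set \<Omega>) S"
    by (rule open_subset) (use \<open>open S\<close> in \<open>auto simp: S_def\<close>)
  moreover have "S \<noteq> {}" using x0 p0 by (auto simp: S_def)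
  ultimately have "S = \<Omega>" using \<open>connected \<Omega>\<close> unfolding connected_clopen by blast
  then have all: "\<forall>x\<in>\<Omega>. M x *v p0 = 0" by (auto simp: S_def)
  show ?thesis
  proof (intro exI conjI ballI allI)
    show "p0 \<noteq> 0" by (rule p0)
    fix x assume x: "x \<in> \<Omega>"
    show "M x *v p0 = 0" using all x by blast
    fix k
    obtain V where "partial_d k M x = V ** M x" using MU x by blast
    then show "partial_d k M x *v p0 = 0" using all x by (simp add: matrix_vector_mul_assoc[symmetric])
  qed
qed

definition Sfac :: "nat \<Rightarrow> (nat \<Rightarrow> complex^'n^'n) \<Rightarrow> complex \<Rightarrow> complex \<Rightarrow> complex^'n^'n" where
  "Sfac N Cx z l = (\<chi> r c. \<Sum>j\<le>N. Cx j $ r $ c * (\<Sum>i<j. z ^ (j - Suc i) * l ^ i))"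

lemma mat_poly_entry_fac:
  "mat_poly N Cx l $ r $ c = mat_poly N Cx z $ r $ c + (l - z) * Sfac N Cx z l $ r $ c"
proof -
  have pw: "Cx j $ r $ c * l ^ j = Cx j $ r $ c * z ^ j + (l - z) * (Cx j $ r $ c * (\<Sum>i<j. z ^ (j - Suc i) * l ^ i))" for j
  proof -
    have "l ^ j - z ^ j = (l - z) * (\<Sum>i<j. z ^ (j - Suc i) * l ^ i)" by (rule power_diff_sumr2)
    then have "l ^ j = z ^ j + (l - z) * (\<Sum>i<j. z ^ (j - Suc i) * l ^ i)" by (simp add: algebra_simps)
    then show ?thesis by (simp only: distrib_left mult.left_commute)
  qed
  have "mat_poly N Cx l $ r $ c = (\<Sum>j\<le>N. Cx j $ r $ c * l ^ j)" by (simp add: mat_poly_def)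
  also have "\<dots> = (\<Sum>j\<le>N. Cx j $ r $ c * z ^ j + (l - z) * (Cx j $ r $ c * (\<Sum>i<j. z ^ (j - Suc i) * l ^ i)))"
    by (rule sum.cong[OF refl]) (rule pw)
  also have "\<dots> = (\<Sum>j\<le>N. Cx j $ r $ c * z ^ j) + (l - z) * (\<Sum>j\<le>N. Cx j $ r $ c * (\<Sum>i<j. z ^ (j - Suc i) * l ^ i))"
    by (simp only: sum.distrib sum_distrib_left)
  also have "\<dots> = mat_poly N Cx z $ r $ c + (l - z) * Sfac N Cx z l $ r $ c"
    by (simp add: mat_poly_def Sfac_def)
  finally show ?thesis .
qed

lemma mat_poly_mv_fac:
  "mat_poly N Cx l *v v = mat_poly N Cx z *v v + (l - z) *s (Sfac N Cx z l *v v)"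
proof -
  have e: "mat_poly N Cx l $r$c * v$c = mat_poly N Cx z $r$c * v$c + (l - z) * (Sfac N Cx z l $r$c * v$c)" for r c
    by (subst mat_poly_entry_fac[of N Cx l r c z]) (simp add: distrib_right mult.assoc)
  have "(mat_poly N Cx l *v v)$r = (mat_poly N Cx z *v v + (l - z) *s (Sfac N Cx z l *v v))$r" for r
    unfolding matrix_vector_mult_def vec_lambda_beta vector_add_component vector_smult_component e
    by (simp add: sum.distrib sum_distrib_left)
  then show ?thesis by (simp add: vec_eq_iff)
qed

lemma Q_mv:
  fixes p w :: "'a::comm_ring_1^'n"
  assumes "a \<noteq> b"
  shows "((\<chi> r s. if s = a then p$r else if s = b then w$r else (if r = s then 1 else 0)) *v x) $ r
     = p$r * x$a + w$r * x$b + (if r \<noteq> a \<and> r \<noteq> b then x$r else 0)"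
proof -
  have "((\<chi> r s. if s = a then p$r else if s = b then w$r else (if r = s then 1 else 0)) *v x) $ r
      = (\<Sum>s\<in>UNIV. (if s = a then p$r * x$a else 0) + (if s = b then w$r * x$b else 0)
            + (if s = r then (if r \<noteq> a \<and> r \<noteq> b then x$r else 0) else 0))"
    unfolding matrix_vector_mult_def vec_lambda_beta
  proof (rule sum.cong[OF refl])
    fix s
    show "(if s = a then p$r else if s = b then w$r else (if r = s then 1 else 0)) * x$s =
      (if s = a then p$r * x$a else 0) + (if s = b then w$r * x$b else 0)
            + (if s = r then (if r \<noteq> a \<and> r \<noteq> b then x$r else 0) else 0)"
      using assms by (cases "s = a"; cases "s = b"; cases "s = r") auto
  qed
  also have "\<dots> = p$r * x$a + w$r * x$b + (if r \<noteq> a \<and> r \<noteq> b then x$r else 0)"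
    by (simp only: sum.distrib sum.delta finite UNIV_I if_True)
  finally show ?thesis .
qed

lemma det_two_rows_mul:
  fixes u1 u2 :: "'a::comm_ring_1^'n"
  assumes ab: "a \<noteq> b"
  shows "det (\<chi> i. if i = a then c1 *s u1 else if i = b then c2 *s u2 else Rw i)
       = c1 * c2 * det (\<chi> i. if i = a then u1 else if i = b then u2 else Rw i)"
proof -
  have "det (\<chi> i. if i = a then c1 *s u1 else if i = b then c2 *s u2 else Rw i)
      = c1 * det (\<chi> i. if i = a then u1 else if i = b then c2 *s u2 else Rw i)"
    using det_row_mul[of a c1 "\<lambda>_. u1" "\<lambda>i. if i = b then c2 *s u2 else Rw i"] by simp
  also have "(\<chi> i. if i = a then u1 else if i = b then c2 *s u2 else Rw i)
      = (\<chi> i. if i = b then c2 *s u2 else (if i = a then u1 else Rw i))"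
    using ab by (simp add: vec_eq_iff)
  also have "det \<dots> = c2 * det (\<chi> i. if i = b then u2 else (if i = a then u1 else Rw i))"
    using det_row_mul[of b c2 "\<lambda>_. u2" "\<lambda>i. if i = a then u1 else Rw i"] by simp
  also have "(\<chi> i. if i = b then u2 else (if i = a then u1 else Rw i))
      = (\<chi> i. if i = a then u1 else if i = b then u2 else Rw i)"
    using ab by (simp add: vec_eq_iff)
  finally show ?thesis by (simp add: mult_ac)
qed

lemma simple_zero_ker:
  fixes Cx :: "nat \<Rightarrow> complex^'n^'n" and z :: complex
  assumes p: "mat_poly N Cx z *v p = 0" "p \<noteq> 0" and w: "mat_poly N Cx z *v w = 0"
    and nd: "\<not>(\<exists>c. w = c *s p)"
  shows "((\<lambda>l. det (mat_poly N Cx l)) has_field_derivative 0) (at z)"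
proof -
  obtain a where a: "p$a \<noteq> 0" using p(2) by (metis vec_eq_iff zero_index)
  define w' where "w' = w - (w$a / p$a) *s p"
  have w'a: "w'$a = 0" using a by (simp add: w'_def)
  have w'0: "w' \<noteq> 0" using nd unfolding w'_def by (metis eq_iff_diff_eq_0)
  then obtain b where b: "w'$b \<noteq> 0" by (metis vec_eq_iff zero_index)
  have ab: "a \<noteq> b" using w'a b by auto
  have Tw': "mat_poly N Cx z *v w' = 0"
    using p w by (simp add: w'_def matrix_vector_mult_diff_distrib vector_scalar_commute)
  define Q :: "complex^'n^'n" where
    "Q = (\<chi> r s. if s = a then p$r else if s = b then w'$r else (if r = s then 1 else 0))"
  have dQ: "det Q \<noteq> 0"
  proof (rule inj_from_ker)
    fix x assume x: "Q *v x = 0"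
    have e: "p$r * x$a + w'$r * x$b + (if r \<noteq> a \<and> r \<noteq> b then x$r else 0) = 0" for r
      using Q_mv[OF ab, of p w' x r] x unfolding Q_def by simp
    have xa: "x$a = 0" using e[of a] w'a a ab by simp
    have xb: "x$b = 0" using e[of b] xa b ab by simp
    have "x$r = 0" for r
    proof (cases "r = a \<or> r = b")
      case True then show ?thesis using xa xb by auto
    next
      case False then show ?thesis using e[of r] xa xb by simp
    qed
    then show "x = 0" by (simp add: vec_eq_iff)
  qed
  define R where "R l = (\<chi> r s. if s = a then (Sfac N Cx z l *v p)$r
      else if s = b then (Sfac N Cx z l *v w')$r else mat_poly N Cx l $r$s)" for l
  have key: "det (mat_poly N Cx l) * det Q = (l - z)^2 * det (R l)" for l
  proof -
    define T where "T = mat_poly N Cx l"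
    define u1 where "u1 = Sfac N Cx z l *v p"
    define u2 where "u2 = Sfac N Cx z l *v w'"
    define Rw where "Rw i = (\<chi> r. T $ r $ i)" for i
    have Tp: "T *v p = (l - z) *s u1"
      using mat_poly_mv_fac[of N Cx l p z] p by (simp add: T_def u1_def)
    have Tw: "T *v w' = (l - z) *s u2"
      using mat_poly_mv_fac[of N Cx l w' z] Tw' by (simp add: T_def u2_def)
    have colQ: "(\<chi> c. Q$c$i) = (if i = a then p else if i = b then w' else axis i 1)" for i
      by (simp add: Q_def vec_eq_iff axis_def)
    have TQ: "(T ** Q) $ r $ i = (T *v (\<chi> c. Q$c$i)) $ r" for r i
      by (simp add: matrix_matrix_mult_def matrix_vector_mult_def)
    have Tax: "(T *v axis i 1) $ r = T $ r $ i" for r i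
      by (simp add: matrix_vector_mult_def axis_def if_distrib[of "\<lambda>x. _ * x"] cong: if_cong)
    have tr1: "transpose (T ** Q) = (\<chi> i. if i = a then (l - z) *s u1 else if i = b then (l - z) *s u2 else Rw i)"
      unfolding vec_eq_iff
    proof (intro allI)
      fix i r
      show "transpose (T ** Q) $ i $ r = (\<chi> i. if i = a then (l - z) *s u1 else if i = b then (l - z) *s u2 else Rw i) $ i $ r"
        by (simp add: transpose_def TQ colQ Tp Tw Tax Rw_def)
    qed
    have tr2: "transpose (R l) = (\<chi> i. if i = a then u1 else if i = b then u2 else Rw i)"
      by (simp add: vec_eq_iff transpose_def R_def u1_def u2_def Rw_def T_def)
    have "det T * det Q = det (T ** Q)" by (simp add: det_mul)
    also have "\<dots> = det (transpose (T ** Q))" by simp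
    also have "\<dots> = (l - z) * (l - z) * det (transpose (R l))"
      unfolding tr1 tr2 by (rule det_two_rows_mul[OF ab])
    also have "\<dots> = (l - z)^2 * det (R l)" by (simp add: power2_eq_square)
    finally show ?thesis by (simp add: T_def)
  qed
  define g where "g l = det (R l) / det Q" for l
  have detT: "det (mat_poly N Cx l) = (l - z)^2 * g l" for l
    using key[of l] dQ by (simp add: g_def field_simps)
  have dR: "isCont (\<lambda>l. det (R l)) z"
  proof (rule det_isCont)
    fix r s
    show "isCont (\<lambda>l. R l $ r $ s) z"
      by (cases "s = a"; cases "s = b")
         (simp_all add: R_def Sfac_def mat_poly_def matrix_vector_mult_def; intro continuous_intros)+
  qed
  have gc: "isCont g z"
    unfolding g_def using dR dQ by (intro continuous_intros) auto
  have lim: "((\<lambda>y. (y - z) * g y) \<longlongrightarrow> (z - z) * g z) (at z)"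
    by (intro tendsto_intros gc[unfolded isCont_def])
  have "((\<lambda>y. (det (mat_poly N Cx y) - det (mat_poly N Cx z)) / (y - z)) \<longlongrightarrow> 0) (at z)"
  proof (rule Lim_transform_eventually[OF lim[simplified]])
    show "\<forall>\<^sub>F y in at z. (y - z) * g y = (det (mat_poly N Cx y) - det (mat_poly N Cx z)) / (y - z)"
      unfolding eventually_at_filter
      by (rule always_eventually) (simp add: detT power2_eq_square)
  qed
  then show ?thesis unfolding has_field_derivative_iff .
qed

lemma smooth_base:
  assumes "smooth_on \<Omega> f"
  shows "continuous_on \<Omega> f" "\<forall>x\<in>\<Omega>. \<forall>k. (\<lambda>t. f (x + t *\<^sub>R axis k 1)) differentiable (at 0)"
  using assms unfolding smooth_on_def by (metis iter_partial.simps(1))+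

theorem mainTheorem2:
  fixes \<Omega> :: "(real^2) set"
    and \<Phi> :: "real^2 \<Rightarrow> complex \<Rightarrow> complex^'n^'n"
    and C :: "nat \<Rightarrow> real^2 \<Rightarrow> complex^'n^'n"
    and N :: nat
    and U :: "2 \<Rightarrow> real^2 \<Rightarrow> complex \<Rightarrow> complex^'n^'n"
    and lam_i :: complex and r :: real
  defines "T \<equiv> (\<lambda>x l. mat_poly N (\<lambda>j. C j x) l)"
  defines "\<Phi>t \<equiv> (\<lambda>x l. T x l ** \<Phi> x l)"
  assumes "open \<Omega>" and "connected \<Omega>"
    and "r > 0"
    and \<Phi>_smooth: "\<forall>l\<in>ball lam_i r. smooth_on \<Omega> (\<lambda>x. \<Phi> x l)"
    and \<Phi>_hol: "\<forall>x\<in>\<Omega>. mat_holomorphic_on (\<Phi> x) (ball lam_i r)"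
    and \<Phi>_inv: "\<forall>x\<in>\<Omega>. \<forall>l\<in>ball lam_i r. invertible (\<Phi> x l)"
    and C_smooth: "\<forall>j\<le>N. smooth_on \<Omega> (C j)"
    and simple_zero: "\<forall>x\<in>\<Omega>. det (T x lam_i) = 0 \<and> deriv (\<lambda>l. det (T x l)) lam_i \<noteq> 0"
    and U_hol: "\<forall>k. \<forall>x\<in>\<Omega>. mat_holomorphic_on (U k x) (ball lam_i r)"
    and U_eq: "\<forall>k. \<forall>x\<in>\<Omega>. \<forall>l\<in>ball lam_i r.
                 partial_d k (\<lambda>y. \<Phi>t y l) x = U k x l ** \<Phi>t x l"
  shows "\<exists>p :: complex^'n. p \<noteq> 0 \<and>
           (\<forall>x\<in>\<Omega>. \<Phi>t x lam_i *v p = 0 \<and> (\<forall>k. partial_d k (\<lambda>y. \<Phi>t y lam_i) x *v p = 0))"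
proof -
  define M where "M y = \<Phi>t y lam_i" for y
  have lam: "lam_i \<in> ball lam_i r" using \<open>r > 0\<close> by simp
  have Ps: "smooth_on \<Omega> (\<lambda>x. \<Phi> x lam_i)" using \<Phi>_smooth lam by blast
  have Meq: "M y = (\<chi> a b. \<Sum>c\<in>UNIV. (\<Sum>j\<le>N. C j y $ a $ c * lam_i ^ j) * \<Phi> y lam_i $ c $ b)" for y
    by (simp add: M_def \<Phi>t_def T_def mat_poly_def matrix_matrix_mult_def)
  have Cc: "continuous_on \<Omega> (\<lambda>y. C j y $ a $ c)" if "j \<in> {..N}" for j a c
    using smooth_base(1)[of \<Omega> "C j"] C_smooth that by (intro continuous_on_component) auto
  have Pc: "continuous_on \<Omega> (\<lambda>y. \<Phi> y lam_i $ a $ c)" for a c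
    using smooth_base(1)[OF Ps] by (intro continuous_on_component)
  have Mc: "continuous_on \<Omega> M"
    unfolding Meq by (intro continuous_on_vec_lambda continuous_intros Cc Pc)
  have Md: "\<forall>x\<in>\<Omega>. \<forall>k. (\<lambda>t. M (x + t *\<^sub>R axis k 1)) differentiable (at 0)"
  proof (intro ballI allI)
    fix x k assume x: "x \<in> \<Omega>"
    have Cd: "(\<lambda>t. C j (x + t *\<^sub>R axis k 1) $ a $ c) differentiable (at 0)" if "j \<in> {..N}" for j a c
      using smooth_base(2)[of \<Omega> "C j"] C_smooth that x
      by (intro vec_nth_differentiable) auto
    have Pd: "(\<lambda>t. \<Phi> (x + t *\<^sub>R axis k 1) lam_i $ a $ c) differentiable (at 0)" for a c
      using smooth_base(2)[OF Ps] x by (intro vec_nth_differentiable) auto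
    show "(\<lambda>t. M (x + t *\<^sub>R axis k 1)) differentiable (at 0)"
      unfolding Meq
      by (intro vec_differentiable, simp only: vec_lambda_beta,
          intro differentiable_sum ballI differentiable_mult differentiable_const Cd Pd) auto
  qed
  have Mdet: "\<forall>x\<in>\<Omega>. det (M x) = 0"
    using simple_zero by (simp add: M_def \<Phi>t_def det_mul)
  have Mker: "\<forall>x\<in>\<Omega>. \<forall>p v. M x *v p = 0 \<longrightarrow> p \<noteq> 0 \<longrightarrow> M x *v v = 0 \<longrightarrow> (\<exists>c. v = c *s p)"
  proof (intro ballI allI impI)
    fix x p v assume x: "x \<in> \<Omega>" and Mp: "M x *v p = 0" and p0: "p \<noteq> 0" and Mv: "M x *v v = 0"
    define B where "B = \<Phi> x lam_i"
    have Binv: "invertible B" using \<Phi>_inv x lam by (simp add: B_def)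
    then obtain B' where B': "B' ** B = mat 1" unfolding invertible_def by blast
    have Binj: "B *v y = B *v y' \<Longrightarrow> y = y'" for y y'
      by (metis B' matrix_vector_mul_assoc matrix_vector_mul_lid)
    have Bp: "B *v p \<noteq> 0" using Binj[of p 0] p0 by auto
    have Tp: "T x lam_i *v (B *v p) = 0" using Mp
      by (simp add: M_def \<Phi>t_def B_def matrix_vector_mul_assoc)
    have Tv: "T x lam_i *v (B *v v) = 0" using Mv
      by (simp add: M_def \<Phi>t_def B_def matrix_vector_mul_assoc)
    show "\<exists>c. v = c *s p"
    proof (rule ccontr)
      assume nc: "\<not> (\<exists>c. v = c *s p)"
      have "\<not> (\<exists>c. B *v v = c *s (B *v p))"
      proof
        assume "\<exists>c. B *v v = c *s (B *v p)"
        then obtain c where "B *v v = B *v (c *s p)" by (auto simp: vector_scalar_commute)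
        then show False using nc Binj by blast
      qed
      then have "((\<lambda>l. det (T x l)) has_field_derivative 0) (at lam_i)"
        using simple_zero_ker[of N "\<lambda>j. C j x" lam_i "B *v p" "B *v v"] Tp Tv Bp
        unfolding T_def by blast
      then have "deriv (\<lambda>l. det (T x l)) lam_i = 0" by (rule DERIV_imp_deriv)
      then show False using simple_zero x by blast
    qed
  qed
  have MU: "\<forall>x\<in>\<Omega>. \<forall>k. \<exists>V. partial_d k M x = V ** M x"
    using U_eq lam unfolding M_def by blast
  obtain p where "p \<noteq> 0" "\<forall>x\<in>\<Omega>. M x *v p = 0 \<and> (\<forall>k. partial_d k M x *v p = 0)"
    using core[OF \<open>open \<Omega>\<close> \<open>connected \<Omega>\<close> Mc Md Mdet Mker MU] by blast
  then show ?thesis unfolding M_def by blast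
qed

end
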